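(* Let $S$ be a numerical semigroup with $\mathrm{l}(S)=3$. Then $\mathrm{t}(S)\in\{2,3,4\}$. Moreover: (a) $\mathrm{t}(S)=2$ iff $\mathrm{h}(S)-\tfrac{\mathrm{F}(S)}{2}\in S$ iff $\mathrm{PF}(S)=\{\mathrm{F}(S),\mathrm{h}(S)\}$; (b) $\mathrm{t}(S)=3$ iff ($\mathrm{h}(S)-\tfrac{\mathrm{F}(S)}{2}\notin S$ and $2\mathrm{h}(S)-\mathrm{F}(S)\in S$) iff $\mathrm{PF}(S)=\{\mathrm{F}(S),\mathrm{h}(S),\tfrac{\mathrm{F}(S)}{2}\}$; (c) $\mathrm{t}(S)=4$ iff $2\mathrm{h}(S)-\mathrm{F}(S)\notin S$ iff $\mathrm{PF}(S)=\{\mathrm{F}(S),\mathrm{h}(S),\tfrac{\mathrm{F}(S)}{2},\mathrm{F}(S)-\mathrm{h}(S)\}$.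
   Context: A numerical semigroup is a subset $S\subseteq\mathbb{N}$ closed under addition with $0\in S$ and $\mathbb{N}\setminus S$ finite; $\mathrm{F}(S)=\max(\mathbb{Z}\setminus S)$. $\mathrm{N}(S)=\{s\in S\mid s<\mathrm{F}(S)\}$, $\mathrm{L}(S)=\{x\in\mathbb{N}\setminus S\mid \mathrm{F}(S)-x\notin \mathrm{N}(S)\}$, $\mathrm{l}(S)=\#\mathrm{L}(S)$. For $\mathrm{l}(S)\ge2$, $\mathrm{h}(S)=\max\{x\in\mathbb{N}\setminus S\mid \mathrm{F}(S)-x\in\mathbb{N}\setminus S,\ x\ne \mathrm{F}(S)/2\}$. $\mathrm{PF}(S)=\{x\in\mathbb{Z}\setminus S\mid x+s\in S \text{ for all } s\in S\setminus\{0\}\}$ and the type is $\mathrm{t}(S)=\#\mathrm{PF}(S)$. *)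

theory Defs
  imports Main
begin

definition numerical_semigroup :: "nat set \<Rightarrow> bool" where
  "numerical_semigroup S \<longleftrightarrow> 0 \<in> S \<and> (\<forall>a\<in>S. \<forall>b\<in>S. a + b \<in> S) \<and> finite (UNIV - S)"

definition inS :: "nat set \<Rightarrow> int \<Rightarrow> bool" where
  "inS S x \<longleftrightarrow> x \<in> int ` S"

definition frob :: "nat set \<Rightarrow> int" where
  "frob S = (GREATEST x::int. \<not> inS S x)"

definition Nset :: "nat set \<Rightarrow> int set" where
  "Nset S = {x. inS S x \<and> x < frob S}"

definition Lset :: "nat set \<Rightarrow> int set" where
  "Lset S = {x. 0 \<le> x \<and> \<not> inS S x \<and> frob S - x \<notin> Nset S}"

definition lnum :: "nat set \<Rightarrow> nat" where
  "lnum S = card (Lset S)"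

definition hnum :: "nat set \<Rightarrow> int" where
  "hnum S = Max {x. 0 \<le> x \<and> \<not> inS S x \<and> 0 \<le> frob S - x \<and> \<not> inS S (frob S - x)
                   \<and> 2 * x \<noteq> frob S}"

definition PF :: "nat set \<Rightarrow> int set" where
  "PF S = {x. \<not> inS S x \<and> (\<forall>s\<in>S. s \<noteq> 0 \<longrightarrow> inS S (x + int s))}"

definition stype :: "nat set \<Rightarrow> nat" where
  "stype S = card (PF S)"

end

theory Submission
  imports Defs
begin

lemma inS_add: "numerical_semigroup S \<Longrightarrow> inS S x \<Longrightarrow> inS S y \<Longrightarrow> inS S (x + y)"
  unfolding numerical_semigroup_def inS_def
  by (auto, metis image_eqI of_nat_add)

lemma inS_nonneg: "inS S x \<Longrightarrow> 0 \<le> x"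
  unfolding inS_def by auto

lemma inS_0: "numerical_semigroup S \<Longrightarrow> inS S 0"
  unfolding numerical_semigroup_def inS_def by force

lemma frob_props:
  assumes "numerical_semigroup S"
  shows "\<not> inS S (frob S) \<and> (\<forall>y. \<not> inS S y \<longrightarrow> y \<le> frob S)"
proof -
  define D where "D = UNIV - S"
  have fD: "finite D" using assms unfolding numerical_semigroup_def D_def by auto
  define M where "M = Max (insert (-1) (int ` D))"
  have fin: "finite (insert (-1) (int ` D))" using fD by auto
  have M1: "\<not> inS S M"
  proof -
    have "M \<in> insert (-1) (int ` D)" unfolding M_def using fin by (rule Max_in) auto
    then show ?thesis unfolding inS_def D_def by auto
  qed
  have M2: "y \<le> M" if "\<not> inS S y" for y
  proof (cases "y < 0")
    case True
    have "-1 \<le> M" unfolding M_def using fin by auto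
    then show ?thesis using True by auto
  next
    case False
    then have "y = int (nat y)" by auto
    moreover have "nat y \<notin> S" using that False unfolding inS_def
      by (metis calculation image_eqI)
    ultimately have "y \<in> int ` D" unfolding D_def by (metis DiffI UNIV_I image_eqI)
    then show ?thesis unfolding M_def using fin by auto
  qed
  have "frob S = M" unfolding frob_def
    using M1 M2 by (intro Greatest_equality) auto
  then show ?thesis using M1 M2 by auto
qed

lemma PF_int: "PF S = {x. \<not> inS S x \<and> (\<forall>s. inS S s \<and> s \<noteq> 0 \<longrightarrow> inS S (x + s))}"
  unfolding PF_def inS_def by auto

lemma Lset_eq: "numerical_semigroup S \<Longrightarrow>
  Lset S = {x. 0 \<le> x \<and> \<not> inS S x \<and> 0 \<le> frob S - x \<and> \<not> inS S (frob S - x)}"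
proof -
  assume ns: "numerical_semigroup S"
  note fp = frob_props[OF ns]
  note z = inS_0[OF ns]
  have "x \<in> Lset S \<longleftrightarrow> 0 \<le> x \<and> \<not> inS S x \<and> 0 \<le> frob S - x \<and> \<not> inS S (frob S - x)" for x
  proof
    assume a: "x \<in> Lset S"
    then have a1: "0 \<le> x" "\<not> inS S x" "\<not> (inS S (frob S - x) \<and> frob S - x < frob S)"
      unfolding Lset_def Nset_def by auto
    have "x \<noteq> 0" using a1 z by auto
    moreover have "x \<le> frob S" using fp a1 by auto
    ultimately show "0 \<le> x \<and> \<not> inS S x \<and> 0 \<le> frob S - x \<and> \<not> inS S (frob S - x)"
      using a1 by auto
  next
    assume "0 \<le> x \<and> \<not> inS S x \<and> 0 \<le> frob S - x \<and> \<not> inS S (frob S - x)"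
    then show "x \<in> Lset S" unfolding Lset_def Nset_def by auto
  qed
  then show ?thesis by auto
qed

lemma pick: assumes "G = {a,b,c}" "2*a = F" "b = F - c" "b \<noteq> c"
  shows "\<exists>m h. G = {m,h,F-h} \<and> 2*m = F \<and> F < 2*(h::int)"
proof (cases "b < c")
  case True
  have "G = {a,c,F-c}" using assms by auto
  moreover have "F < 2*c" using True assms by linarith
  ultimately show ?thesis using assms by blast
next
  case False
  have "G = {a,b,F-b}" using assms by auto
  moreover have "F < 2*b" using False assms by linarith
  ultimately show ?thesis using assms by blast
qed

theorem corollary17:
  assumes "numerical_semigroup S" and "lnum S = 3"
  shows "stype S \<in> {2, 3, 4}
    \<and> ((stype S = 2 \<longleftrightarrow> inS S (hnum S - frob S div 2))
       \<and> (inS S (hnum S - frob S div 2) \<longleftrightarrow> PF S = {frob S, hnum S}))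
    \<and> ((stype S = 3 \<longleftrightarrow> (\<not> inS S (hnum S - frob S div 2) \<and> inS S (2 * hnum S - frob S)))
       \<and> ((\<not> inS S (hnum S - frob S div 2) \<and> inS S (2 * hnum S - frob S))
            \<longleftrightarrow> PF S = {frob S, hnum S, frob S div 2}))
    \<and> ((stype S = 4 \<longleftrightarrow> \<not> inS S (2 * hnum S - frob S))
       \<and> (\<not> inS S (2 * hnum S - frob S)
            \<longleftrightarrow> PF S = {frob S, hnum S, frob S div 2, frob S - hnum S}))"
proof -
  note ns = assms(1)
  note fp = frob_props[OF ns]
  note z = inS_0[OF ns]
  note add = inS_add[OF ns]
  define F where "F = frob S"
  define G where "G = Lset S"
  have Gm: "x \<in> G \<longleftrightarrow> 0 \<le> x \<and> \<not> inS S x \<and> 0 \<le> F - x \<and> \<not> inS S (F - x)" for x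
    unfolding G_def F_def Lset_eq[OF ns] by auto
  have GF: "x \<in> G \<Longrightarrow> F - x \<in> G" for x using Gm by auto
  have "card G = 3" using assms(2) unfolding lnum_def G_def .
  then have "\<exists>x y z. G = {x,y,z} \<and> x \<noteq> y \<and> y \<noteq> z \<and> x \<noteq> z"
    by (simp only: card_3_iff)
  then obtain a b c where abc: "G = {a,b,c}" "a \<noteq> b" "b \<noteq> c" "a \<noteq> c"
    by blast
  have "a \<in> G" "b \<in> G" "c \<in> G" unfolding abc(1) by simp_all
  then have "F - a \<in> G" "F - b \<in> G" "F - c \<in> G" using GF by blast+
  then have "F - a \<in> {a,b,c}" "F - b \<in> {a,b,c}" "F - c \<in> {a,b,c}" unfolding abc(1) .
  then have "(2*a=F \<and> b = F-c) \<or> (2*b=F \<and> a=F-c) \<or> (2*c=F \<and> a = F-b)"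
    using abc(2-4) by (simp only: insert_iff empty_iff simp_thms) (elim disjE; linarith)
  then have "\<exists>m h. G = {m,h,F-h} \<and> 2*m = F \<and> F < 2*(h::int)"
  proof (elim disjE)
    assume "2*a=F \<and> b = F-c"
    then show ?thesis using pick[of G a b c F] abc by blast
  next
    assume "2*b=F \<and> a = F-c"
    moreover have "G = {b,a,c}" using abc by auto
    ultimately show ?thesis using pick[of G b a c F] abc by blast
  next
    assume "2*c=F \<and> a = F-b"
    moreover have "G = {c,a,b}" using abc by auto
    ultimately show ?thesis using pick[of G c a b F] abc by blast
  qed
  then obtain m h where mh: "G = {m, h, F - h}" "2*m = F" "F < 2*h" by blast
  have hG: "h \<in> G" and mG: "m \<in> G" and hG': "F - h \<in> G" using mh by auto
  have "\<not> inS S (F - h)" using hG' Gm by blast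
  then have hF: "F - h \<noteq> 0" using z by auto
  have "0 \<le> F - h" using hG' Gm by blast
  then have ord: "F - h < m" "m < h" "h < F" "0 \<le> F - h" using mh(2,3) hF by arith+
  have hnum: "hnum S = h"
  proof -
    have "x \<in> {x. 0 \<le> x \<and> \<not> inS S x \<and> 0 \<le> frob S - x \<and> \<not> inS S (frob S - x) \<and> 2 * x \<noteq> frob S}
       \<longleftrightarrow> x \<in> {h, F - h}" for x
    proof -
      have "x \<in> {x. 0 \<le> x \<and> \<not> inS S x \<and> 0 \<le> frob S - x \<and> \<not> inS S (frob S - x) \<and> 2 * x \<noteq> frob S}
        \<longleftrightarrow> x \<in> G \<and> 2 * x \<noteq> F" unfolding Gm F_def by simp
      also have "\<dots> \<longleftrightarrow> x \<in> {m, h, F - h} \<and> 2 * x \<noteq> F" unfolding mh(1) ..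
      also have "\<dots> \<longleftrightarrow> x \<in> {h, F - h}" using mh(2,3) by auto
      finally show ?thesis .
    qed
    then have "{x. 0 \<le> x \<and> \<not> inS S x \<and> 0 \<le> frob S - x \<and> \<not> inS S (frob S - x) \<and> 2 * x \<noteq> frob S}
       = {h, F - h}" by blast
    then show ?thesis unfolding hnum_def using ord by (simp add: max_def)
  qed
  have div: "frob S div 2 = m" using mh(2) unfolding F_def by auto
  have nh: "\<not> inS S h" and nm: "\<not> inS S m" and nFh: "\<not> inS S (F - h)"
    using hG mG hG' Gm by blast+
  have le: "\<not> inS S y \<Longrightarrow> y \<le> F" for y using fp F_def by auto
  have PFm: "x \<in> PF S \<longleftrightarrow> \<not> inS S x \<and> (\<forall>s. inS S s \<and> s \<noteq> 0 \<longrightarrow> inS S (x + s))" for x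
    unfolding PF_int by auto
  have P1: "F \<in> PF S"
    unfolding PFm
  proof (intro conjI allI impI)
    show "\<not> inS S F" using fp F_def by simp
    fix s assume s: "inS S s \<and> s \<noteq> 0"
    then have "0 < s" using inS_nonneg[of S s] by linarith
    then show "inS S (F + s)" using le[of "F + s"] by linarith
  qed
  have P2: "x \<in> PF S \<Longrightarrow> x = F \<or> x \<in> G" for x
  proof -
    assume x: "x \<in> PF S"
    show ?thesis
    proof (cases "x = F")
      case False
      have nx: "\<not> inS S x" using x PFm by blast
      have "\<not> inS S (F - x)"
      proof
        assume "inS S (F - x)"
        moreover have "F - x \<noteq> 0" using False by auto
        ultimately have "inS S (x + (F - x))" using x PFm by blast
        then show False using fp F_def by auto
      qed
      moreover have "x \<le> F" using le nx by auto
      moreover have "F - x \<le> F" using le calculation by auto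
      ultimately have "x \<in> G" unfolding Gm using nx by auto
      then show ?thesis by blast
    qed auto
  qed
  have P3: "h \<in> PF S"
    unfolding PFm
  proof (intro conjI nh allI impI)
    fix s assume s: "inS S s \<and> s \<noteq> 0"
    have s0: "0 < s" using s inS_nonneg by fastforce
    show "inS S (h + s)"
    proof (rule ccontr)
      assume a: "\<not> inS S (h + s)"
      then have "h + s \<le> F" using le by auto
      show False
      proof (cases "inS S (F - (h + s))")
        case True
        then have "inS S (F - (h+s) + s)" using add s by blast
        moreover have "F - (h+s) + s = F - h" by simp
        ultimately show False using nFh by simp
      next
        case False
        then have "h + s \<in> G" unfolding Gm using a \<open>h + s \<le> F\<close> ord s0 by auto
        then show False using mh ord s0 by auto
      qed
    qed
  qed
  have P4: "m \<in> PF S \<longleftrightarrow> \<not> inS S (h - m)"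
  proof
    assume pm: "m \<in> PF S"
    show "\<not> inS S (h - m)"
    proof
      assume hm: "inS S (h - m)"
      have "h - m \<noteq> 0" using ord by simp
      then have "inS S (m + (h - m))" using pm hm PFm by blast
      then show False using nh by simp
    qed
  next
    assume nhm: "\<not> inS S (h - m)"
    show "m \<in> PF S" unfolding PFm
    proof (intro conjI nm allI impI)
      fix s assume s: "inS S s \<and> s \<noteq> 0"
      have s0: "0 < s" using s inS_nonneg by fastforce
      show "inS S (m + s)"
      proof (rule ccontr)
        assume a: "\<not> inS S (m + s)"
        then have "m + s \<le> F" using le by auto
        show False
        proof (cases "inS S (F - (m + s))")
          case True
          then have "inS S (F - (m+s) + s)" using add s by blast
          moreover have "F - (m+s) + s = m" using mh(2) by simp
          ultimately show False using nm by simp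
        next
          case False
          then have "m + s \<in> G" unfolding Gm using a \<open>m + s \<le> F\<close> ord s0 by auto
          then have "m + s = h" using mh ord s0 by auto
          then show False using nhm s by auto
        qed
      qed
    qed
  qed
  have P5: "F - h \<in> PF S \<longleftrightarrow> \<not> inS S (h - m) \<and> \<not> inS S (2*h - F)"
  proof
    assume a: "F - h \<in> PF S"
    have "\<not> inS S (h - m)"
    proof
      assume "inS S (h - m)"
      moreover have "h - m \<noteq> 0" using ord by simp
      ultimately have "inS S (F - h + (h - m))" using a PFm by blast
      moreover have "F - h + (h - m) = m" using mh(2) by simp
      ultimately show False using nm by simp
    qed
    moreover have "\<not> inS S (2*h - F)"
    proof
      assume "inS S (2*h - F)"
      moreover have "2*h - F \<noteq> 0" using ord by simp
      ultimately have "inS S (F - h + (2*h - F))" using a PFm by blast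
      moreover have "F - h + (2*h - F) = h" by simp
      ultimately show False using nh by simp
    qed
    ultimately show "\<not> inS S (h - m) \<and> \<not> inS S (2*h - F)" by auto
  next
    assume nn: "\<not> inS S (h - m) \<and> \<not> inS S (2*h - F)"
    show "F - h \<in> PF S" unfolding PFm
    proof (intro conjI nFh allI impI)
      fix s assume s: "inS S s \<and> s \<noteq> 0"
      have s0: "0 < s" using s inS_nonneg by fastforce
      show "inS S (F - h + s)"
      proof (rule ccontr)
        assume a: "\<not> inS S (F - h + s)"
        then have "F - h + s \<le> F" using le by auto
        show False
        proof (cases "inS S (F - (F - h + s))")
          case True
          then have "inS S (F - (F - h + s) + s)" using add s by blast
          moreover have "F - (F - h + s) + s = h" by simp
          ultimately show False using nh by simp
        next
          case False
          then have "F - h + s \<in> G" unfolding Gm using a \<open>F - h + s \<le> F\<close> ord s0 by auto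
          then have "F - h + s = h \<or> F - h + s = m" using mh ord s0 by auto
          moreover have "F - h + s = h \<Longrightarrow> s = 2*h - F" by simp
          moreover have "F - h + s = m \<Longrightarrow> s = h - m" using mh(2) by simp
          ultimately show False using nn s by metis
        qed
      qed
    qed
  qed
  have imp: "inS S (h - m) \<Longrightarrow> inS S (2*h - F)"
  proof -
    assume "inS S (h - m)"
    then have "inS S ((h - m) + (h - m))" using add by blast
    moreover have "(h - m) + (h - m) = 2*h - F" using mh(2) by simp
    ultimately show ?thesis by simp
  qed
  have PFsub: "PF S \<subseteq> {F, h, m, F - h}" using P2 mh(1) by blast
  have d: "F \<noteq> h" "F \<noteq> m" "h \<noteq> m" "F \<noteq> F - h" "h \<noteq> F - h" "m \<noteq> F - h"
    using ord by auto
  have c2: "card {F, h} = 2" using d by simp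
  have c3: "card {F, h, m} = 3" using d by simp
  have c4: "card {F, h, m, F - h} = 4" using d by simp
  have e1: "{F, h} \<noteq> {F, h, m}" "{F, h} \<noteq> {F, h, m, F - h}" "{F, h, m} \<noteq> {F, h, m, F - h}"
    using d by (auto simp: insert_eq_iff)
  have divF: "F div 2 = m" using mh(2) by simp
  have goal: "stype S = card (PF S)" by (simp add: stype_def)
  show ?thesis
  proof (cases "inS S (h - m)")
    case True
    have PFe: "PF S = {F, h}"
    proof
      show "PF S \<subseteq> {F, h}" using PFsub P4 P5 True by blast
      show "{F, h} \<subseteq> PF S" using P1 P3 by blast
    qed
    have "stype S = 2" using goal PFe c2 by simp
    then show ?thesis using True imp PFe e1 unfolding hnum F_def[symmetric] divF by simp
  next
    case nt: False
    show ?thesis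
    proof (cases "inS S (2*h - F)")
      case True
      have PFe: "PF S = {F, h, m}"
      proof
        show "PF S \<subseteq> {F, h, m}" using PFsub P5 True by blast
        show "{F, h, m} \<subseteq> PF S" using P1 P3 P4 nt by blast
      qed
      have "stype S = 3" using goal PFe c3 by simp
      then show ?thesis using True nt PFe e1 unfolding hnum F_def[symmetric] divF by simp
    next
      case False
      have PFe: "PF S = {F, h, m, F - h}"
      proof
        show "PF S \<subseteq> {F, h, m, F - h}" using PFsub by blast
        show "{F, h, m, F - h} \<subseteq> PF S" using P1 P3 P4 P5 nt False by blast
      qed
      have "stype S = 4" using goal PFe c4 by simp
      then show ?thesis using False nt PFe e1 unfolding hnum F_def[symmetric] divF by simp
    qed
  qed
qed

end
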